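(* Let $\mathcal{B}_4$, $\pi_{\lambda,\mu}$ ($\lambda\neq0,\mu\in\mathbb{R}$), the group Fourier transform and the difference operators $\Delta_{x_i}$ be as in the context. Then for a suitable distribution $\kappa$ on $\mathcal{B}_4$ (e.g. $\kappa\in\mathcal{S}(\mathbb{R}^4)$), $$\Delta_{x_3}\hat\kappa(\pi_{\lambda,\mu})=\frac{i}{\lambda}\Big(\Delta_{x_2}\pi_{\lambda,\mu}(\kappa)\,\pi_{\lambda,\mu}(X_3)+\pi_{\lambda,\mu}(\kappa)\pi_{\lambda,\mu}(X_1)-\pi_{\lambda,\mu}(X_1)\pi_{\lambda,\mu}(\kappa)\Big),$$ where $\pi_{\lambda,\mu}(X_1)=\partial_u$, $\pi_{\lambda,\mu}(X_3)$ is multiplication by $-i\lambda u$, and $\Delta_{x_2}\pi_{\lambda,\mu}(\kappa)=\pi_{\lambda,\mu}(x_2\kappa)=\frac{2\lambda}{i}\partial_\mu\pi_{\lambda,\mu}(\kappa)$.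
   Context: The Engel group $\mathcal{B}_4$ is $\mathbb{R}^4$ with the law $(x_1,x_2,x_3,x_4)\circ(y_1,y_2,y_3,y_4)=(x_1+y_1,x_2+y_2,x_3+y_3-x_1y_2,x_4+y_4+\frac12x_1^2y_2-x_1y_3)$ and Haar measure the Lebesgue measure. Its left-invariant vector fields are $X_1=\partial_{x_1}$, $X_2=\partial_{x_2}-x_1\partial_{x_3}+\frac{x_1^2}{2}\partial_{x_4}$, $X_3=\partial_{x_3}-x_1\partial_{x_4}$, $X_4=\partial_{x_4}$. For $\lambda\neq0$, $\mu\in\mathbb{R}$, $\pi_{\lambda,\mu}(x)h(u)=\exp\big(i(-\frac{\mu}{2\lambda}x_2+\lambda x_4-\lambda x_3u+\frac{\lambda}{2}x_2u^2)\big)h(u+x_1)$ on $L^2(\mathbb{R})$. The group Fourier transform is $\hat\kappa(\pi_{\lambda,\mu})=\pi_{\lambda,\mu}(\kappa)=\int_{\mathcal{B}_4}\kappa(x)\pi_{\lambda,\mu}(x)^*dx$; explicitly $\pi_{\lambda,\mu}(\kappa)h(u)=\int_{\mathbb{R}^4}\kappa(x)\exp\big(i(\frac{\mu}{2\lambda}x_2-\lambda x_4+\lambda x_3(u-x_1)-\frac{\lambda}{2}x_2(u-x_1)^2)\big)h(u-x_1)\,dx$. The same symbol $\pi_{\lambda,\mu}$ denotes the infinitesimal representation: $\pi_{\lambda,\mu}(X_1)=\partial_u$, $\pi_{\lambda,\mu}(X_2)=\frac{i}{2}(\lambda u^2-\frac{\mu}{\lambda})$, $\pi_{\lambda,\mu}(X_3)=-i\lambda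 u$, $\pi_{\lambda,\mu}(X_4)=i\lambda$. The difference operators are defined by $\Delta_{x_i}\hat\kappa(\pi_{\lambda,\mu}):=\pi_{\lambda,\mu}(x_i\kappa)$, $i=1,\dots,4$. *)

theory Defs
  imports "HOL-Analysis.Analysis"
begin

definition dir_deriv :: "'a::euclidean_space \<Rightarrow> ('a \<Rightarrow> complex) \<Rightarrow> 'a \<Rightarrow> complex" where
  "dir_deriv b f x = vector_derivative (\<lambda>t::real. f (x + t *\<^sub>R b)) (at 0)"

fun iter_pd :: "'a::euclidean_space list \<Rightarrow> ('a \<Rightarrow> complex) \<Rightarrow> 'a \<Rightarrow> complex" where
  "iter_pd [] f = f"
| "iter_pd (b # bs) f = dir_deriv b (iter_pd bs f)"

definition schwartz :: "('a::euclidean_space \<Rightarrow> complex) \<Rightarrow> bool" where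
  "schwartz f \<longleftrightarrow>
     (\<forall>bs. set bs \<subseteq> Basis \<longrightarrow>
        (\<forall>x. iter_pd bs f differentiable at x) \<and>
        (\<forall>k::nat. bounded (range (\<lambda>x. ((1 + norm x) ^ k) *\<^sub>R iter_pd bs f x))))"

text \<open>Group Fourier transform of \<kappa> at \<pi>_{\<lambda>,\<mu>}, acting on h, evaluated at u
  (the explicit formula of the paper; Haar measure = Lebesgue measure on R^4,
  coordinates x$1,...,x$4).\<close>
definition piK :: "real \<Rightarrow> real \<Rightarrow> (real^4 \<Rightarrow> complex) \<Rightarrow> (real \<Rightarrow> complex) \<Rightarrow> real \<Rightarrow> complex" where
  "piK l m \<kappa> h u =
     (LINT x|lborel. \<kappa> x *
        exp (\<i> * complex_of_real (m / (2 * l) * x$2 - l * x$4 + l * x$3 * (u - x$1)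
                                   - l / 2 * x$2 * (u - x$1)\<^sup>2))
        * h (u - x$1))"

definition piX1 :: "(real \<Rightarrow> complex) \<Rightarrow> real \<Rightarrow> complex" where
  "piX1 h = (\<lambda>u. vector_derivative h (at u))"

definition piX3 :: "real \<Rightarrow> (real \<Rightarrow> complex) \<Rightarrow> real \<Rightarrow> complex" where
  "piX3 l h = (\<lambda>u. - \<i> * complex_of_real l * complex_of_real u * h u)"

definition Delta :: "4 \<Rightarrow> real \<Rightarrow> real \<Rightarrow> (real^4 \<Rightarrow> complex) \<Rightarrow> (real \<Rightarrow> complex) \<Rightarrow> real \<Rightarrow> complex" where
  "Delta i l m \<kappa> = piK l m (\<lambda>x. complex_of_real (x$i) * \<kappa> x)"

end

theory Submission imports Defs "HOL-Probability.Sinc_Integral" begin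

lemma has_vector_derivative_iff_quot:
  fixes f :: "real \<Rightarrow> 'b::real_normed_vector"
  shows "(f has_vector_derivative D) (at x within S) \<longleftrightarrow>
    ((\<lambda>y. (f y - f x) /\<^sub>R (y - x)) \<longlongrightarrow> D) (at x within S)"
proof -
  have "((\<lambda>y. norm (f y - f x - (y - x) *\<^sub>R D) / norm (y - x)) \<longlongrightarrow> 0) (at x within S) 
      = ((\<lambda>y. (f y - f x) /\<^sub>R (y - x) - D) \<longlongrightarrow> 0) (at x within S)"
  proof -
    have "norm (f y - f x - (y - x) *\<^sub>R D) / norm (y - x) = norm ((f y - f x) /\<^sub>R (y - x) - D)"
      if "y \<noteq> x" for y
    proof -
      have "(f y - f x) /\<^sub>R (y - x) - D = (f y - f x - (y - x) *\<^sub>R D) /\<^sub>R (y - x)"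
        using that by (simp add: scaleR_diff_right)
      then show ?thesis by (simp add: divide_inverse mult.commute)
    qed
    then show ?thesis
      by (subst tendsto_norm_zero_iff[symmetric]) (intro filterlim_cong refl, auto simp: eventually_at_filter)
  qed
  then show ?thesis
    by (simp add: has_vector_derivative_def has_derivative_iff_norm bounded_linear_scaleR_left LIM_zero_iff)
qed


lemma deriv_bound_vec:
  fixes f :: "real \<Rightarrow> 'b::real_normed_vector"
  assumes "\<And>t. t \<in> S \<Longrightarrow> (f has_vector_derivative f' t) (at t)"
    and "\<And>t. t \<in> S \<Longrightarrow> norm (f' t) \<le> B" and "convex S" and "a \<in> S" and "b \<in> S"
  shows "norm (f b - f a) \<le> B * \<bar>b - a\<bar>"
proof -
  have "norm (f b - f a) \<le> B * norm (b - a)"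
  proof (rule differentiable_bound[OF \<open>convex S\<close>, of f "\<lambda>t h. h *\<^sub>R f' t"])
    show "(f has_derivative (\<lambda>h. h *\<^sub>R f' t)) (at t within S)" if "t \<in> S" for t
      using assms(1)[OF that] by (simp add: has_vector_derivative_def has_derivative_at_withinI)
    show "onorm (\<lambda>h. h *\<^sub>R f' t) \<le> B" if "t \<in> S" for t
      using assms(2)[OF that] onorm_scaleR_left[OF bounded_linear_ident, of "f' t"] by (simp add: onorm_id)
  qed (use assms in auto)
  then show ?thesis by simp
qed

lemma deriv_integral:
  fixes f f' :: "real \<Rightarrow> 'a \<Rightarrow> complex"
  assumes r: "r > 0"
  and meas: "\<And>t. f t \<in> borel_measurable M"
  and int0: "integrable M (f t0)"
  and der: "\<And>x t. x \<in> space M \<Longrightarrow> t \<in> ball t0 r \<Longrightarrow> ((\<lambda>s. f s x) has_vector_derivative f' t x) (at t)"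
  and bnd: "\<And>x t. x \<in> space M \<Longrightarrow> t \<in> ball t0 r \<Longrightarrow> norm (f' t x) \<le> g x"
  and intg: "integrable M g"
  and meas': "f' t0 \<in> borel_measurable M"
  shows "((\<lambda>t. LINT x|M. f t x) has_vector_derivative (LINT x|M. f' t0 x)) (at t0)"
proof -
  define q where "q t x = (f t x - f t0 x) /\<^sub>R (t - t0)" for t x
  have qb: "norm (q t x) \<le> g x" if "x \<in> space M" "t \<in> ball t0 r" "t \<noteq> t0" for x t
  proof -
    have "norm (f t x - f t0 x) \<le> g x * \<bar>t - t0\<bar>"
      by (rule deriv_bound_vec[of "ball t0 r"]) (use that r der bnd in auto)
    then show ?thesis using that by (simp add: q_def divide_simps)
  qed
  have qm: "q t \<in> borel_measurable M" for t
    unfolding q_def using meas by measurable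
  have qi: "integrable M (q t)" if "t \<in> ball t0 r" "t \<noteq> t0" for t
    by (rule Bochner_Integration.integrable_bound[OF intg qm]) (use qb that in \<open>auto intro!: AE_I2 intro: order_trans[OF _ abs_ge_self]\<close>)
  have fi: "integrable M (f t)" if "t \<in> ball t0 r" for t
  proof (cases "t = t0")
    case False
    have "f t = (\<lambda>x. f t0 x + (t - t0) *\<^sub>R q t x)" using False by (auto simp: q_def)
    then show ?thesis using qi[OF that False] int0 by simp
  qed (use int0 in simp)
  have eq: "((LINT x|M. f t x) - (LINT x|M. f t0 x)) /\<^sub>R (t - t0) = (LINT x|M. q t x)"
    if "t \<in> ball t0 r" "t \<noteq> t0" for t
    using fi[OF that(1)] int0 by (simp add: q_def integral_diff[symmetric])
  have lim: "((\<lambda>t. LINT x|M. q t x) \<longlongrightarrow> (LINT x|M. f' t0 x)) (at t0 within ball t0 r)"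
    unfolding tendsto_at_iff_sequentially comp_def
  proof (intro allI impI)
    fix X :: "nat \<Rightarrow> real" assume X: "\<forall>i. X i \<in> ball t0 r - {t0}" "X \<longlonglongrightarrow> t0"
    show "(\<lambda>n. LINT x|M. q (X n) x) \<longlonglongrightarrow> (LINT x|M. f' t0 x)"
    proof (rule integral_dominated_convergence[where w=g])
      show "AE x in M. (\<lambda>n. q (X n) x) \<longlonglongrightarrow> f' t0 x"
      proof (rule AE_I2)
        fix x assume x: "x \<in> space M"
        have "((\<lambda>s. q s x) \<longlongrightarrow> f' t0 x) (at t0 within ball t0 r)"
          using der[OF x, of t0] r unfolding q_def has_vector_derivative_iff_quot
          by (auto intro: tendsto_within_subset)
        then show "(\<lambda>n. q (X n) x) \<longlonglongrightarrow> f' t0 x"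
          using X unfolding tendsto_at_iff_sequentially comp_def by blast
      qed
      show "AE x in M. norm (q (X n) x) \<le> g x" for n
        using X(1) qb by auto
    qed (use meas' intg qm in auto)
  qed
  have "((\<lambda>t. ((LINT x|M. f t x) - (LINT x|M. f t0 x)) /\<^sub>R (t - t0)) \<longlongrightarrow> (LINT x|M. f' t0 x)) (at t0 within ball t0 r)"
  proof (rule Lim_transform_within[OF lim r])
    fix t assume "t \<in> ball t0 r" "0 < dist t t0" "dist t t0 < r"
    then show "(LINT x|M. q t x) = ((LINT x|M. f t x) - (LINT x|M. f t0 x)) /\<^sub>R (t - t0)"
      using eq[of t] by auto
  qed
  then have "((\<lambda>t. ((LINT x|M. f t x) - (LINT x|M. f t0 x)) /\<^sub>R (t - t0)) \<longlongrightarrow> (LINT x|M. f' t0 x)) (at t0)"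
  proof -
    have "at t0 within ball t0 r = at t0" by (rule at_within_open) (use r in auto)
    with \<open>((\<lambda>t. ((LINT x|M. f t x) - (LINT x|M. f t0 x)) /\<^sub>R (t - t0)) \<longlongrightarrow> (LINT x|M. f' t0 x)) (at t0 within ball t0 r)\<close>
    show ?thesis by metis
  qed
  then show ?thesis by (subst has_vector_derivative_iff_quot)
qed

lemma integrable_weight:
  "integrable lborel (\<lambda>x::real^4. \<Prod>b\<in>Basis. inverse (1 + (x \<bullet> b)^2))"
proof -
  have i1: "integrable lborel (\<lambda>t::real. inverse (1 + t^2))"
    using integrable_inverse_1_plus_square by (simp add: set_integrable_def einterval_def)
  have fin: "(\<integral>\<^sup>+t. ennreal (inverse (1 + t^2)) \<partial>lborel) < \<infinity>"
    using i1 by (simp add: integrable_iff_bounded)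
  have "(\<integral>\<^sup>+(x::real^4). ennreal (\<Prod>b\<in>Basis. inverse (1 + (x \<bullet> b)^2)) \<partial>lborel)
      = (\<integral>\<^sup>+(x::real^4). (\<Prod>b\<in>Basis. (\<lambda>b t. ennreal (inverse (1 + t^2))) b (x \<bullet> b)) \<partial>lborel)"
    by (intro nn_integral_cong) (simp add: prod_ennreal)
  also have "\<dots> = (\<Prod>b\<in>(Basis::(real^4) set). (\<integral>\<^sup>+t. ennreal (inverse (1 + t^2)) \<partial>lborel))"
    by (rule nn_integral_lborel_prod) auto
  also have "\<dots> < \<infinity>" using fin by (simp add: power_less_top_ennreal)
  finally have fin4: "(\<integral>\<^sup>+(x::real^4). ennreal (\<Prod>b\<in>Basis. inverse (1 + (x \<bullet> b)^2)) \<partial>lborel) < \<infinity>" .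
  show ?thesis
  proof (rule integrableI_nonneg)
    show "(\<lambda>x::real^4. \<Prod>b\<in>Basis. inverse (1 + (x \<bullet> b)^2)) \<in> borel_measurable lborel"
      by measurable
    show "AE x in lborel. 0 \<le> (\<Prod>b\<in>Basis. inverse (1 + ((x::real^4) \<bullet> b)^2))"
      by (intro AE_I2 prod_nonneg) (simp add: add_nonneg_nonneg)
  qed (use fin4 in simp)
qed

lemma kappa_weight:
  fixes \<kappa> :: "real^4 \<Rightarrow> complex"
  assumes "schwartz \<kappa>"
  shows "integrable lborel (\<lambda>x. norm (\<kappa> x) * (1 + norm x)^2)" "continuous_on UNIV \<kappa>"
proof -
  have s: "(\<forall>x. \<kappa> differentiable at x) \<and> (\<forall>k::nat. bounded (range (\<lambda>x. ((1 + norm x) ^ k) *\<^sub>R \<kappa> x)))"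
    using assms[unfolded schwartz_def, rule_format, of "[]"] by simp
  then show "continuous_on UNIV \<kappa>"
    by (intro continuous_at_imp_continuous_on ballI differentiable_imp_continuous_within) auto
  then have meas: "\<kappa> \<in> borel_measurable lborel" by (simp add: borel_measurable_continuous_onI)
  obtain C where C: "\<And>x. norm (((1 + norm x) ^ 10) *\<^sub>R \<kappa> x) \<le> C"
    using s unfolding bounded_iff by blast
  let ?w = "\<lambda>x::real^4. \<Prod>b\<in>Basis. inverse (1 + (x \<bullet> b)^2)"
  show "integrable lborel (\<lambda>x. norm (\<kappa> x) * (1 + norm x)^2)"
  proof (rule Bochner_Integration.integrable_bound[OF integrable_mult_right[OF integrable_weight, of C]])
    show "(\<lambda>x. norm (\<kappa> x) * (1 + norm x)^2) \<in> borel_measurable lborel" using meas by measurable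
    show "AE x in lborel. norm (norm (\<kappa> x) * (1 + norm x)^2) \<le> norm (C * ?w x)"
    proof (rule AE_I2)
      fix x :: "real^4"
      let ?N = "1 + norm x"
      have N1: "1 \<le> ?N" by simp
      have "(\<Prod>b\<in>(Basis::(real^4) set). 1 + (x \<bullet> b)^2) \<le> (\<Prod>b\<in>(Basis::(real^4) set). ?N^2)"
      proof (rule prod_mono)
        fix b :: "real^4" assume b: "b \<in> Basis"
        have "\<bar>x \<bullet> b\<bar> \<le> norm x" by (rule Basis_le_norm[OF b])
        then have "(x \<bullet> b)^2 \<le> (norm x)^2" by (metis abs_le_square_iff abs_norm_cancel)
        moreover have "(norm x)^2 + 1 \<le> ?N^2" by (simp add: power2_eq_square algebra_simps)
        ultimately show "0 \<le> 1 + (x \<bullet> b)^2 \<and> 1 + (x \<bullet> b)^2 \<le> ?N^2" by simp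
      qed
      also have "\<dots> = ?N^8" by (simp add: power_mult[symmetric])
      finally have P: "(\<Prod>b\<in>(Basis::(real^4) set). 1 + (x \<bullet> b)^2) \<le> ?N^8" .
      let ?P = "\<Prod>b\<in>(Basis::(real^4) set). 1 + (x \<bullet> b)^2"
      have Ppos: "0 < ?P"
        by (intro prod_pos) (simp add: add_pos_nonneg)
      have w: "?w x = inverse ?P"
        using prod_inversef[of "\<lambda>b. 1 + (x \<bullet> b)^2" Basis] by (simp add: comp_def)
      have w0: "0 \<le> ?w x" using Ppos w by simp
      have Pn: "?P \<noteq> 0" using Ppos by linarith
      have wP: "?P * ?w x = 1" using Pn w by simp
      have "?N^10 * norm (\<kappa> x) \<le> C" using C[of x] by simp
      then have c1: "norm (\<kappa> x) * ?N^2 * ?N^8 \<le> C"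
        by (simp add: power_add[symmetric] mult_ac)
      have "norm (\<kappa> x) * ?N^2 * ?P \<le> norm (\<kappa> x) * ?N^2 * ?N^8"
        by (intro mult_left_mono P) simp
      with c1 have c2: "norm (\<kappa> x) * ?N^2 * ?P \<le> C" by linarith
      have "norm (\<kappa> x) * ?N^2 = norm (\<kappa> x) * ?N^2 * ?P * ?w x"
        using wP by (simp add: mult.assoc)
      also have "\<dots> \<le> C * ?w x" by (rule mult_right_mono[OF c2 w0])
      finally have "norm (\<kappa> x) * ?N^2 \<le> C * ?w x" .
      moreover have "0 \<le> norm (\<kappa> x) * ?N^2" by simp
      ultimately show "norm (norm (\<kappa> x) * ?N^2) \<le> norm (C * ?w x)" by simp
    qed
  qed
qed

lemma schwartz_1d:
  fixes h :: "real \<Rightarrow> complex"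
  assumes "schwartz h"
  shows "continuous_on UNIV h" "\<exists>H. \<forall>x. norm (h x) \<le> H"
    "\<And>x. (h has_vector_derivative piX1 h x) (at x)"
    "continuous_on UNIV (piX1 h)" "\<exists>H. \<forall>x. norm (piX1 h x) \<le> H"
proof -
  have A: "\<forall>bs. set bs \<subseteq> Basis \<longrightarrow>
        (\<forall>x. iter_pd bs h differentiable at x) \<and>
        (\<forall>k::nat. bounded (range (\<lambda>x. ((1 + norm x) ^ k) *\<^sub>R iter_pd bs h x)))"
    using assms unfolding schwartz_def .
  have "set ([]::real list) \<subseteq> Basis" by simp
  with A have "(\<forall>x. iter_pd [] h differentiable at x) \<and>
        (\<forall>k::nat. bounded (range (\<lambda>x. ((1 + norm x) ^ k) *\<^sub>R iter_pd [] h x)))" by blast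
  then have s0: "(\<forall>x. h differentiable at x) \<and> (\<forall>k::nat. bounded (range (\<lambda>x. ((1 + norm x) ^ k) *\<^sub>R h x)))"
    unfolding iter_pd.simps .
  have "set ([1]::real list) \<subseteq> Basis" by (simp add: Basis_real_def)
  with A have "(\<forall>x. iter_pd [1] h differentiable at x) \<and>
        (\<forall>k::nat. bounded (range (\<lambda>x. ((1 + norm x) ^ k) *\<^sub>R iter_pd [1] h x)))" by blast
  then have s1: "(\<forall>x. dir_deriv 1 h differentiable at x) \<and> (\<forall>k::nat. bounded (range (\<lambda>x. ((1 + norm x) ^ k) *\<^sub>R dir_deriv 1 h x)))"
    unfolding iter_pd.simps .
  show "continuous_on UNIV h" using s0
    by (intro continuous_at_imp_continuous_on ballI differentiable_imp_continuous_within) auto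
  show D: "(h has_vector_derivative piX1 h x) (at x)" for x
    unfolding piX1_def by (rule vector_derivative_works[THEN iffD1]) (use s0 in blast)
  have eq: "dir_deriv 1 h x = piX1 h x" for x
  proof -
    have "((\<lambda>t. x + t) has_vector_derivative (0 + 1)) (at 0)"
      by (intro has_vector_derivative_add has_vector_derivative_const has_vector_derivative_id)
    then have "((\<lambda>t. x + t) has_vector_derivative 1) (at 0)" by simp
    from vector_diff_chain_at[OF this, of h "piX1 h x"] D[of x]
    have "((\<lambda>t. h (x + t)) has_vector_derivative piX1 h x) (at 0)" by (simp add: o_def)
    then show ?thesis unfolding dir_deriv_def by (simp add: vector_derivative_at)
  qed
  show "continuous_on UNIV (piX1 h)" using s1 unfolding eq[abs_def, symmetric]
    by (intro continuous_at_imp_continuous_on ballI differentiable_imp_continuous_within) (auto simp: eq)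
  obtain C where "\<And>x. norm (((1 + norm x) ^ 0) *\<^sub>R h x) \<le> C"
    using s0 unfolding bounded_iff by blast
  then show "\<exists>H. \<forall>x. norm (h x) \<le> H" by auto
  obtain C where "\<And>x. norm (((1 + norm x) ^ 0) *\<^sub>R dir_deriv 1 h x) \<le> C"
    using s1 unfolding bounded_iff by blast
  then show "\<exists>H. \<forall>x. norm (piX1 h x) \<le> H" by (auto simp: eq)
qed

lemma dexp:
  assumes "(g has_real_derivative g') (at t)"
  shows "((\<lambda>s. exp (\<i> * complex_of_real (g s))) has_vector_derivative
           (exp (\<i> * complex_of_real (g t)) * (\<i> * complex_of_real g'))) (at t)"
proof -
  have "((\<lambda>s. \<i> * complex_of_real (g s)) has_vector_derivative (\<i> * complex_of_real g')) (at t)"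
    by (rule has_vector_derivative_mult_right[OF has_vector_derivative_of_real[OF assms]])
  from field_vector_diff_chain_at[OF this DERIV_exp]
  show ?thesis by (simp add: o_def mult.commute)
qed

lemma int_helper:
  fixes f :: "real^4 \<Rightarrow> complex"
  assumes "integrable lborel W" "continuous_on UNIV f" "\<And>x. norm (f x) \<le> K * W x"
  shows "integrable lborel f"
proof (rule Bochner_Integration.integrable_bound[OF integrable_mult_right[OF assms(1), of K]])
  show "f \<in> borel_measurable lborel" using assms(2) by (simp add: borel_measurable_continuous_onI)
  show "AE x in lborel. norm (f x) \<le> norm (K * W x)"
    by (intro AE_I2, rule order_trans[OF assms(3)]) simp
qed

lemma norm_E: "norm (exp (\<i> * complex_of_real y)) = 1"
  by (simp add: norm_exp_eq_Re)

lemma coord_le: "\<bar>(x::real^4)$i\<bar> \<le> norm x"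
  by (rule component_le_norm_cart)
lemma bound3: "0 \<le> (a::real) \<Longrightarrow> 0 \<le> b \<Longrightarrow> b \<le> B \<Longrightarrow> 0 \<le> c \<Longrightarrow> c \<le> C \<Longrightarrow> a * b * c \<le> a * B * C"
  by (intro mult_mono mult_left_mono) (auto intro: order_trans)

theorem mainTheorem3:
  fixes l m :: real and \<kappa> :: "real^4 \<Rightarrow> complex" and h :: "real \<Rightarrow> complex" and u :: real
  assumes "l \<noteq> 0" and "schwartz \<kappa>" and "schwartz h"
  shows "Delta 3 l m \<kappa> h u =
           (\<i> / complex_of_real l) *
             (Delta 2 l m \<kappa> (piX3 l h) u + piK l m \<kappa> (piX1 h) u - piX1 (piK l m \<kappa> h) u)
       \<and> Delta 2 l m \<kappa> h u =
           (2 * complex_of_real l / \<i>) * vector_derivative (\<lambda>m'. piK l m' \<kappa> h u) (at m)"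
proof -
  have l0: "l \<noteq> 0" using assms(1) .
  have l0c: "complex_of_real l \<noteq> 0" using l0 by simp
  define W where "W x = norm (\<kappa> x) * (1 + norm x)^2" for x :: "real^4"
  have Wint: "integrable lborel W" unfolding W_def using kappa_weight[OF assms(2)] by simp
  have kc: "continuous_on UNIV \<kappa>" using kappa_weight[OF assms(2)] by simp
  note hs = schwartz_1d[OF assms(3)]
  have hc: "continuous_on UNIV h" by (rule hs(1))
  obtain H where H: "\<And>x. norm (h x) \<le> H" using hs(2) by blast
  have hd: "\<And>x. (h has_vector_derivative piX1 h x) (at x)" by (rule hs(3))
  have h1c: "continuous_on UNIV (piX1 h)" by (rule hs(4))
  obtain H1 where H1: "\<And>x. norm (piX1 h x) \<le> H1" using hs(5) by blast
  have H0: "0 \<le> H" using H[of 0] norm_ge_zero order_trans by blast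
  have H10: "0 \<le> H1" using H1[of 0] norm_ge_zero order_trans by blast
  define \<phi> where "\<phi> m' u' x = m' / (2 * l) * x$2 - l * x$4 + l * x$3 * (u' - x$1) - l / 2 * x$2 * (u' - x$1)\<^sup>2"
    for m' u' :: real and x :: "real^4"
  define E where "E m' u' x = exp (\<i> * complex_of_real (\<phi> m' u' x))" for m' u' :: real and x :: "real^4"
  have piK_eq: "piK l m' k g u' = (LINT x|lborel. k x * E m' u' x * g (u' - x$1))" for m' u' k g
    unfolding piK_def E_def \<phi>_def by simp
  have Ec: "continuous_on UNIV (E m' u')" for m' u'
    unfolding E_def \<phi>_def by (intro continuous_intros)
  have En: "norm (E m' u' x) = 1" for m' u' x unfolding E_def by (rule norm_E)
  have comp: "continuous_on UNIV (\<lambda>x::real^4. g (u' - x$1))" if "continuous_on UNIV g" for g :: "real \<Rightarrow> complex" and u'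
    by (rule continuous_on_compose2[OF that]) (auto intro!: continuous_intros)
  have W0: "0 \<le> W x" for x unfolding W_def by simp
  have cN: "\<bar>x$i\<bar> \<le> (1 + norm x)^2" for x :: "real^4" and i
  proof -
    have "\<bar>x$i\<bar> \<le> norm x" by (rule coord_le)
    also have "norm x \<le> (1 + norm x)^2" by (simp add: power2_eq_square algebra_simps)
    finally show ?thesis .
  qed
  have P1: "1 \<le> (1 + norm (x::real^4))^2" for x by (simp add: power2_eq_square algebra_simps)

  define f2 where "f2 m' x = \<kappa> x * E m' u x * h (u - x$1)" for m' x
  define f2' where "f2' m' x = \<kappa> x * (E m' u x * (\<i> * complex_of_real (x$2 / (2*l)))) * h (u - x$1)" for m' x
  have der2: "((\<lambda>s. f2 s x) has_vector_derivative f2' t x) (at t)" for x t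
  proof -
    have "((\<lambda>s. \<phi> s u x) has_real_derivative x$2 / (2*l)) (at t)"
      unfolding \<phi>_def using l0 by (auto intro!: derivative_eq_intros)
    then have "((\<lambda>s. E s u x) has_vector_derivative (E t u x * (\<i> * complex_of_real (x$2 / (2*l))))) (at t)"
      unfolding E_def by (rule dexp)
    then show ?thesis unfolding f2_def f2'_def
      by (intro has_vector_derivative_mult_left has_vector_derivative_mult_right)
  qed
  have D2: "((\<lambda>t. LINT x|lborel. f2 t x) has_vector_derivative (LINT x|lborel. f2' m x)) (at m)"
  proof (rule deriv_integral[where r=1 and g="\<lambda>x. (H / (2 * \<bar>l\<bar>)) * W x"])
    show "f2 t \<in> borel_measurable lborel" for t
      unfolding f2_def unfolding measurable_lborel2 by (intro borel_measurable_continuous_onI continuous_intros kc Ec comp hc)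
    show "f2' m \<in> borel_measurable lborel"
      unfolding f2'_def measurable_lborel2 using l0 by (intro borel_measurable_continuous_onI continuous_intros kc Ec comp hc) auto
    show "integrable lborel (\<lambda>x. H / (2 * \<bar>l\<bar>) * W x)" using Wint by simp
    show "integrable lborel (f2 m)"
    proof (rule int_helper[OF Wint, of _ H])
      show "continuous_on UNIV (f2 m)"
        unfolding f2_def by (intro continuous_intros kc Ec comp hc)
      show "norm (f2 m x) \<le> H * W x" for x
      proof -
        have "norm (f2 m x) = norm (\<kappa> x) * 1 * norm (h (u - x$1))" by (simp add: f2_def norm_mult En)
        also have "\<dots> \<le> norm (\<kappa> x) * (1 + norm x)^2 * H" by (rule bound3) (use P1 H in auto)
        finally show ?thesis by (simp add: W_def mult_ac)
      qed
    qed
    show "norm (f2' t x) \<le> H / (2 * \<bar>l\<bar>) * W x" for t x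
    proof -
      have "norm (f2' t x) = norm (\<kappa> x) * (\<bar>x$2\<bar> / (2 * \<bar>l\<bar>)) * norm (h (u - x$1))"
        by (simp add: f2'_def norm_mult En norm_divide)
      also have "\<dots> \<le> norm (\<kappa> x) * ((1 + norm x)^2 / (2 * \<bar>l\<bar>)) * H"
        by (rule bound3) (use cN H in \<open>auto intro: divide_right_mono\<close>)
      finally show ?thesis by (simp add: W_def mult_ac)
    qed
  qed (auto intro: der2)
  have "(\<lambda>m'. piK l m' \<kappa> h u) = (\<lambda>t. LINT x|lborel. f2 t x)"
    by (simp add: piK_eq f2_def)
  then have VD2: "vector_derivative (\<lambda>m'. piK l m' \<kappa> h u) (at m) = (LINT x|lborel. f2' m x)"
    using D2 by (simp add: vector_derivative_at)
  have f2'eq: "f2' m x = (\<i> / (2 * complex_of_real l)) * ((complex_of_real (x$2) * \<kappa> x) * E m u x * h (u - x$1))" for x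
    unfolding f2'_def using l0c by (simp add: field_simps)
  have Delta2: "Delta 2 l m \<kappa> h u = (LINT x|lborel. (complex_of_real (x$2) * \<kappa> x) * E m u x * h (u - x$1))"
    unfolding Delta_def piK_eq ..
  have part2: "Delta 2 l m \<kappa> h u = (2 * complex_of_real l / \<i>) * vector_derivative (\<lambda>m'. piK l m' \<kappa> h u) (at m)"
    unfolding VD2 f2'eq integral_mult_right_zero Delta2[symmetric] using l0c by (simp add: field_simps)
  define f1 where "f1 u' x = \<kappa> x * E m u' x * h (u' - x$1)" for u' x
  define f1' where "f1' u' x = \<kappa> x * (E m u' x * (\<i> * complex_of_real (l * x$3 - l * x$2 * (u' - x$1)))) * h (u' - x$1)
      + \<kappa> x * E m u' x * piX1 h (u' - x$1)" for u' x
  have der1: "((\<lambda>s. f1 s x) has_vector_derivative f1' t x) (at t)" for x t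
  proof -
    have "((\<lambda>s. \<phi> m s x) has_real_derivative (l * x$3 - l * x$2 * (t - x$1))) (at t)"
      unfolding \<phi>_def by (auto intro!: derivative_eq_intros simp: field_simps)
    then have dE: "((\<lambda>s. E m s x) has_vector_derivative (E m t x * (\<i> * complex_of_real (l * x$3 - l * x$2 * (t - x$1))))) (at t)"
      unfolding E_def by (rule dexp)
    have "((\<lambda>s. s - x$1) has_vector_derivative (1 - 0)) (at t)"
      by (intro has_vector_derivative_diff has_vector_derivative_const has_vector_derivative_id)
    then have "((\<lambda>s. s - x$1) has_vector_derivative 1) (at t)" by simp
    from vector_diff_chain_at[OF this hd[of "t - x$1"]]
    have dh: "((\<lambda>s. h (s - x$1)) has_vector_derivative piX1 h (t - x$1)) (at t)" by (simp add: o_def)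
    have "((\<lambda>s. (\<kappa> x * E m s x) * h (s - x$1)) has_vector_derivative
       ((\<kappa> x * E m t x) * piX1 h (t - x$1) + (\<kappa> x * (E m t x * (\<i> * complex_of_real (l * x$3 - l * x$2 * (t - x$1))))) * h (t - x$1))) (at t)"
      by (rule has_vector_derivative_mult[OF has_vector_derivative_mult_right[OF dE] dh])
    then show ?thesis unfolding f1_def f1'_def by (simp add: add.commute)
  qed
  define K1 where "K1 = H * \<bar>l\<bar> * (\<bar>u\<bar> + 3) + H1"
  have D1: "((\<lambda>t. LINT x|lborel. f1 t x) has_vector_derivative (LINT x|lborel. f1' u x)) (at u)"
  proof (rule deriv_integral[where r=1 and g="\<lambda>x. K1 * W x"])
    show "f1 t \<in> borel_measurable lborel" for t
      unfolding f1_def unfolding measurable_lborel2 by (intro borel_measurable_continuous_onI continuous_intros kc Ec comp hc)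
    show "f1' u \<in> borel_measurable lborel"
      unfolding f1'_def unfolding measurable_lborel2 by (intro borel_measurable_continuous_onI continuous_intros kc Ec comp hc h1c)
    show "integrable lborel (\<lambda>x. K1 * W x)" using Wint by simp
    show "integrable lborel (f1 u)"
    proof (rule int_helper[OF Wint, of _ H])
      show "continuous_on UNIV (f1 u)"
        unfolding f1_def by (intro continuous_intros kc Ec comp hc)
      show "norm (f1 u x) \<le> H * W x" for x
      proof -
        have "norm (f1 u x) = norm (\<kappa> x) * 1 * norm (h (u - x$1))" by (simp add: f1_def norm_mult En)
        also have "\<dots> \<le> norm (\<kappa> x) * (1 + norm x)^2 * H" by (rule bound3) (use P1 H in auto)
        finally show ?thesis by (simp add: W_def mult_ac)
      qed
    qed
    show "norm (f1' t x) \<le> K1 * W x" if t: "t \<in> ball u 1" for t x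
    proof -
      define N where "N = norm x"
      define P where "P = (1 + norm x)^2"
      have N0: "0 \<le> N" unfolding N_def by simp
      have c1: "\<bar>x$1\<bar> \<le> N" "\<bar>x$2\<bar> \<le> N" "\<bar>x$3\<bar> \<le> N" unfolding N_def by (rule coord_le)+
      have NP: "N \<le> P" "N * N \<le> P" "1 \<le> P" unfolding N_def P_def by (simp_all add: power2_eq_square algebra_simps)
      have tb: "\<bar>t\<bar> \<le> \<bar>u\<bar> + 1" using t by (simp add: dist_real_def)
      have e1: "\<bar>l * x$3 - l * x$2 * (t - x$1)\<bar> \<le> \<bar>l * x$3\<bar> + \<bar>l * x$2 * (t - x$1)\<bar>"
        by (rule abs_triangle_ineq4)
      have e2: "\<bar>l * x$2 * (t - x$1)\<bar> = \<bar>l\<bar> * (\<bar>x$2\<bar> * \<bar>t - x$1\<bar>)" by (simp add: abs_mult)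
      have e2': "\<bar>l * x$3\<bar> = \<bar>l\<bar> * \<bar>x$3\<bar>" by (simp add: abs_mult)
      have tx: "\<bar>t - x$1\<bar> \<le> \<bar>u\<bar> + 1 + N" using tb c1(1) by linarith
      have e3: "\<bar>x$2\<bar> * \<bar>t - x$1\<bar> \<le> N * (\<bar>u\<bar> + 1 + N)"
        by (rule mult_mono[OF c1(2) tx]) (use N0 in auto)
      have e4: "N * (\<bar>u\<bar> + 1 + N) = (\<bar>u\<bar> + 1) * N + N * N" by (simp add: algebra_simps)
      have e5: "(\<bar>u\<bar> + 1) * N \<le> (\<bar>u\<bar> + 1) * P" by (rule mult_left_mono[OF NP(1)]) simp
      have Q: "\<bar>x$3\<bar> + \<bar>x$2\<bar> * \<bar>t - x$1\<bar> \<le> (\<bar>u\<bar> + 3) * P"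
        using c1(3) NP e3 e4 e5 by (simp add: algebra_simps)
      have "\<bar>l * x$3 - l * x$2 * (t - x$1)\<bar> \<le> \<bar>l\<bar> * (\<bar>x$3\<bar> + \<bar>x$2\<bar> * \<bar>t - x$1\<bar>)"
        using e1 e2 e2' by (simp add: distrib_left)
      also have "\<dots> \<le> \<bar>l\<bar> * ((\<bar>u\<bar> + 3) * P)" by (rule mult_left_mono[OF Q]) simp
      finally have A: "\<bar>l * x$3 - l * x$2 * (t - x$1)\<bar> \<le> \<bar>l\<bar> * ((\<bar>u\<bar> + 3) * P)" .
      have "norm (f1' t x) \<le> norm (\<kappa> x * (E m t x * (\<i> * complex_of_real (l * x$3 - l * x$2 * (t - x$1)))) * h (t - x$1))
          + norm (\<kappa> x * E m t x * piX1 h (t - x$1))"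
        unfolding f1'_def by (rule norm_triangle_ineq)
      also have "norm (\<kappa> x * (E m t x * (\<i> * complex_of_real (l * x$3 - l * x$2 * (t - x$1)))) * h (t - x$1))
          = norm (\<kappa> x) * \<bar>l * x$3 - l * x$2 * (t - x$1)\<bar> * norm (h (t - x$1))"
        by (simp only: norm_mult En) (simp add: norm_mult del: of_real_mult of_real_diff)
      also have "\<dots> \<le> norm (\<kappa> x) * (\<bar>l\<bar> * ((\<bar>u\<bar> + 3) * P)) * H"
        by (rule bound3) (use A H in auto)
      also have "norm (\<kappa> x * E m t x * piX1 h (t - x$1)) = norm (\<kappa> x) * 1 * norm (piX1 h (t - x$1))"
        by (simp add: norm_mult En)
      also have "\<dots> \<le> norm (\<kappa> x) * P * H1"
        by (rule bound3) (use NP H1 in auto)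
      finally show ?thesis unfolding K1_def W_def P_def[symmetric] by (simp add: algebra_simps)
    qed
  qed (auto intro: der1)
  have "piK l m \<kappa> h = (\<lambda>t. LINT x|lborel. f1 t x)"
    by (simp add: piK_eq f1_def fun_eq_iff)
  then have VD1: "piX1 (piK l m \<kappa> h) u = (LINT x|lborel. f1' u x)"
    using D1 unfolding piX1_def by (simp add: vector_derivative_at)
  define I3 where "I3 x = (complex_of_real (x$3) * \<kappa> x) * E m u x * h (u - x$1)" for x
  define I2 where "I2 x = (complex_of_real (x$2) * \<kappa> x) * E m u x * piX3 l h (u - x$1)" for x
  define I1 where "I1 x = \<kappa> x * E m u x * piX1 h (u - x$1)" for x
  have p3c: "continuous_on UNIV (piX3 l h)" unfolding piX3_def by (intro continuous_intros hc)
  have i3: "integrable lborel I3"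
  proof (rule int_helper[OF Wint, of _ H])
    show "continuous_on UNIV I3" unfolding I3_def by (intro continuous_intros kc Ec comp hc)
    show "norm (I3 x) \<le> H * W x" for x
    proof -
      have "norm (I3 x) = norm (\<kappa> x) * \<bar>x$3\<bar> * norm (h (u - x$1))" by (simp add: I3_def norm_mult En)
      also have "\<dots> \<le> norm (\<kappa> x) * (1 + norm x)^2 * H" by (rule bound3) (use cN H in auto)
      finally show ?thesis by (simp add: W_def mult_ac)
    qed
  qed
  have i1: "integrable lborel I1"
  proof (rule int_helper[OF Wint, of _ H1])
    show "continuous_on UNIV I1" unfolding I1_def by (intro continuous_intros kc Ec comp h1c)
    show "norm (I1 x) \<le> H1 * W x" for x
    proof -
      have "norm (I1 x) = norm (\<kappa> x) * 1 * norm (piX1 h (u - x$1))" by (simp add: I1_def norm_mult En)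
      also have "\<dots> \<le> norm (\<kappa> x) * (1 + norm x)^2 * H1" by (rule bound3) (use P1 H1 in auto)
      finally show ?thesis by (simp add: W_def mult_ac)
    qed
  qed
  have i2: "integrable lborel I2"
  proof (rule int_helper[OF Wint, of _ "H * \<bar>l\<bar> * (\<bar>u\<bar> + 1)"])
    show "continuous_on UNIV I2" unfolding I2_def by (intro continuous_intros kc Ec comp p3c)
    show "norm (I2 x) \<le> H * \<bar>l\<bar> * (\<bar>u\<bar> + 1) * W x" for x
    proof -
      define N where "N = norm x"
      define P where "P = (1 + norm x)^2"
      have N0: "0 \<le> N" unfolding N_def by simp
      have c1: "\<bar>x$1\<bar> \<le> N" "\<bar>x$2\<bar> \<le> N" unfolding N_def by (rule coord_le)+
      have NP: "N \<le> P" "N * N \<le> P" "1 \<le> P" unfolding N_def P_def by (simp_all add: power2_eq_square algebra_simps)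
      have tx: "\<bar>u - x$1\<bar> \<le> \<bar>u\<bar> + N" using c1(1) by linarith
      have e3: "\<bar>x$2\<bar> * \<bar>u - x$1\<bar> \<le> N * (\<bar>u\<bar> + N)"
        by (rule mult_mono[OF c1(2) tx]) (use N0 in auto)
      have e5: "\<bar>u\<bar> * N \<le> \<bar>u\<bar> * P" by (rule mult_left_mono[OF NP(1)]) simp
      have Q: "\<bar>x$2\<bar> * \<bar>u - x$1\<bar> \<le> (\<bar>u\<bar> + 1) * P"
        using e3 e5 NP by (simp add: algebra_simps)
      have "norm (I2 x) = norm (\<kappa> x) * (\<bar>l\<bar> * (\<bar>x$2\<bar> * \<bar>u - x$1\<bar>)) * norm (h (u - x$1))"
        unfolding I2_def piX3_def by (simp add: norm_mult En mult_ac del: of_real_diff)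
      also have "\<dots> \<le> norm (\<kappa> x) * (\<bar>l\<bar> * ((\<bar>u\<bar> + 1) * P)) * H"
        by (rule bound3) (use Q H in \<open>auto intro: mult_left_mono\<close>)
      finally show ?thesis unfolding W_def P_def[symmetric] by (simp add: algebra_simps)
    qed
  qed
  have f1'eq: "f1' u x = \<i> * complex_of_real l * I3 x + I2 x + I1 x" for x
    unfolding f1'_def I3_def I2_def I1_def piX3_def by (simp add: algebra_simps)
  have int_f1': "(LINT x|lborel. f1' u x) = \<i> * complex_of_real l * (LINT x|lborel. I3 x) + (LINT x|lborel. I2 x) + (LINT x|lborel. I1 x)"
    unfolding f1'eq using i1 i2 i3 by (simp add: integral_add integral_mult_right_zero)
  have D3: "Delta 3 l m \<kappa> h u = (LINT x|lborel. I3 x)" unfolding Delta_def piK_eq I3_def ..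
  have D2': "Delta 2 l m \<kappa> (piX3 l h) u = (LINT x|lborel. I2 x)" unfolding Delta_def piK_eq I2_def ..
  have D1': "piK l m \<kappa> (piX1 h) u = (LINT x|lborel. I1 x)" unfolding piK_eq I1_def ..
  have part1: "Delta 3 l m \<kappa> h u =
           (\<i> / complex_of_real l) *
             (Delta 2 l m \<kappa> (piX3 l h) u + piK l m \<kappa> (piX1 h) u - piX1 (piK l m \<kappa> h) u)"
    unfolding D3 D2' D1' VD1 int_f1' using l0c by (simp add: field_simps)
  show ?thesis using part1 part2 by blast
qed

end
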